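(* Let $n\ge1$ and let $p$ be a strongly 312-avoiding permutation of $\{1,\dots,n\}$ with $p_n=1$. Then there is an integer $k$ with $1\le k\le n$ such that $p=(k+1)(k+2)\cdots n\;k(k-1)\cdots 2\,1$.
   Context: Permutations are written in one-line notation $p=p_1\cdots p_n$ with $p_i=p(i)$. $p$ contains a pattern $q=q_1\cdots q_m$ if there are indices $i_1<\cdots<i_m$ with $p_{i_r}<p_{i_s}$ iff $q_r<q_s$; otherwise $p$ avoids $q$. $p^2(i)=p(p(i))$. A permutation $p$ is strongly $q$-avoiding if both $p$ and $p^2$ avoid $q$. *)

theory Defs
  imports "HOL-Combinatorics.Permutations"
begin

text \<open>A permutation of {1..n} is a function p :: nat => nat with p permutes {1..n};
  its one-line notation is p 1, ..., p n. A pattern q = q_1 ... q_m is given as a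
  list of naturals (q_{r+1} = q ! r).\<close>

definition contains_pattern :: "nat \<Rightarrow> (nat \<Rightarrow> nat) \<Rightarrow> nat list \<Rightarrow> bool" where
  "contains_pattern n p q \<longleftrightarrow>
     (\<exists>idx :: nat \<Rightarrow> nat.
        (\<forall>r < length q. 1 \<le> idx r \<and> idx r \<le> n) \<and>
        (\<forall>r s. r < s \<and> s < length q \<longrightarrow> idx r < idx s) \<and>
        (\<forall>r < length q. \<forall>s < length q. p (idx r) < p (idx s) \<longleftrightarrow> q ! r < q ! s))"

definition avoids_pattern :: "nat \<Rightarrow> (nat \<Rightarrow> nat) \<Rightarrow> nat list \<Rightarrow> bool" where
  "avoids_pattern n p q \<longleftrightarrow> \<not> contains_pattern n p q"

definition strongly_avoids :: "nat \<Rightarrow> (nat \<Rightarrow> nat) \<Rightarrow> nat list \<Rightarrow> bool" where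
  "strongly_avoids n p q \<longleftrightarrow> avoids_pattern n p q \<and> avoids_pattern n (p \<circ> p) q"

end

theory Submission
  imports Defs
begin

lemma pat312:
  assumes "1 \<le> i" "i < j" "j < l" "l \<le> n" "f j < f l" "f l < f i"
  shows "contains_pattern n f [3,1,2]"
  unfolding contains_pattern_def
  apply (rule exI[of _ "\<lambda>r. if r = 0 then i else if r = 1 then j else l"])
  using assms by (auto simp: less_Suc_eq numeral_3_eq_3 nth_Cons')

lemma card_contra:
  assumes "inj_on f A" "f ` A \<subseteq> B" "finite B" "card B < card A"
  shows False
  using card_inj_on_le[OF assms(1-3)] assms(4) by simp

theorem lemma3p6:
  fixes n :: nat and p :: "nat \<Rightarrow> nat"
  assumes "n \<ge> 1"
    and "p permutes {1..n}"
    and "strongly_avoids n p [3, 1, 2]"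
    and "p n = 1"
  shows "\<exists>k. 1 \<le> k \<and> k \<le> n \<and>
           (\<forall>j \<in> {1..n}. p j = (if j \<le> n - k then k + j else n + 1 - j))"
proof (cases "n = 1")
  case True
  then show ?thesis using assms(4) by (intro exI[of _ 1]) auto
next
  case False
  hence n2: "n \<ge> 2" using assms(1) by simp
  have av1: "\<not> contains_pattern n p [3,1,2]" and av2: "\<not> contains_pattern n (p \<circ> p) [3,1,2]"
    using assms(3) unfolding strongly_avoids_def avoids_pattern_def by auto
  have inj: "inj p" using assms(2) by (rule permutes_inj)
  have rng: "\<And>x. 1 \<le> x \<Longrightarrow> x \<le> n \<Longrightarrow> 1 \<le> p x \<and> p x \<le> n"
    using permutes_in_image[OF assms(2)] by auto
  have injeq: "\<And>x y. p x = p y \<Longrightarrow> x = y" using inj by (simp add: inj_eq)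
  have surj: "\<And>v. 1 \<le> v \<Longrightarrow> v \<le> n \<Longrightarrow> \<exists>x. 1 \<le> x \<and> x \<le> n \<and> p x = v"
  proof -
    fix v assume "1 \<le> v" "v \<le> n"
    hence "v \<in> p ` {1..n}" using permutes_image[OF assms(2)] by simp
    thus "\<exists>x. 1 \<le> x \<and> x \<le> n \<and> p x = v" by auto
  qed
  obtain m where m: "1 \<le> m" "m \<le> n" "p m = n" using surj[of n] assms(1) by auto
  have mn: "m < n" using m assms(4) n2 by (cases "m = n") auto
  define k where "k = n - m"
  define q where "q = p \<circ> p"
  have qinj: "\<And>x y. q x = q y \<Longrightarrow> x = y" unfolding q_def using injeq by simp
  have qrng: "\<And>x. 1 \<le> x \<Longrightarrow> x \<le> n \<Longrightarrow> 1 \<le> q x \<and> q x \<le> n"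
    unfolding q_def using rng by auto
  have qm: "q m = 1" unfolding q_def using m assms(4) by simp
  have qn: "q n = p 1" unfolding q_def using assms(4) by simp
  have A: "\<And>l1 l2. m < l1 \<Longrightarrow> l1 < l2 \<Longrightarrow> l2 \<le> n \<Longrightarrow> p l2 < p l1"
  proof (rule ccontr)
    fix l1 l2 assume h: "m < l1" "l1 < l2" "l2 \<le> n" "\<not> p l2 < p l1"
    have "p l1 \<noteq> p l2" using injeq h by auto
    hence "p l1 < p l2" using h by simp
    moreover have "p l2 < p m"
    proof -
      have "p l2 \<noteq> n" using injeq m h by (metis less_irrefl order.strict_trans)
      thus ?thesis using rng[of l2] h m by (simp add: le_less)
    qed
    ultimately show False using av1 pat312[of m l1 l2 n p] h m by simp
  qed
  have B: "\<And>i l. 1 \<le> i \<Longrightarrow> i < m \<Longrightarrow> m < l \<Longrightarrow> l \<le> n \<Longrightarrow> q i < q l"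
  proof (rule ccontr)
    fix i l assume h: "1 \<le> i" "i < m" "m < l" "l \<le> n" "\<not> q i < q l"
    have "i \<noteq> l" using h by simp
    hence "q i \<noteq> q l" using qinj by auto
    hence "q l < q i" using h by simp
    moreover have "q m < q l"
    proof -
      have "q l \<noteq> 1" using qinj qm h by (metis less_irrefl)
      thus ?thesis using qrng[of l] h m qm by simp
    qed
    ultimately show False using av2 pat312[of i m l n q] h m unfolding q_def by simp
  qed
  have C1: "p 1 > m"
  proof (rule ccontr)
    assume "\<not> p 1 > m"
    hence qnm: "q n \<le> m" using qn by simp
    have "q ` ({1..m} \<union> {n}) \<subseteq> {1..m}"
    proof
      fix y assume "y \<in> q ` ({1..m} \<union> {n})"
      then obtain x where x: "x \<in> {1..m} \<union> {n}" "y = q x" by blast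
      show "y \<in> {1..m}"
      proof (cases "x = n")
        case True thus ?thesis using qnm x qrng[of n] n2 by auto
      next
        case False
        hence "1 \<le> x" "x \<le> m" using x by auto
        thus ?thesis using B[of x n] qnm qm x qrng[of x] mn m by (cases "x = m") auto
      qed
    qed
    moreover have "inj_on q ({1..m} \<union> {n})" using qinj by (meson inj_onI)
    moreover have "card ({1..m} \<union> {n}) = m + 1" using mn by simp
    ultimately show False using card_contra[of q "{1..m} \<union> {n}" "{1..m}"] by simp
  qed
  have C2: "\<And>i. 1 \<le> i \<Longrightarrow> i < m \<Longrightarrow> q i \<le> m"
  proof (rule ccontr)
    fix i assume h: "1 \<le> i" "i < m" "\<not> q i \<le> m"
    have "q ` ({i} \<union> {m+1..n}) \<subseteq> {m+1..n}"
    proof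
      fix y assume "y \<in> q ` ({i} \<union> {m+1..n})"
      then obtain x where x: "x \<in> {i} \<union> {m+1..n}" "y = q x" by blast
      show "y \<in> {m+1..n}"
      proof (cases "x = i")
        case True thus ?thesis using h x qrng[of i] m by auto
      next
        case False
        hence "m < x" "x \<le> n" using x by auto
        thus ?thesis using B[of i x] h x qrng[of x] m by auto
      qed
    qed
    moreover have "inj_on q ({i} \<union> {m+1..n})" using qinj by (meson inj_onI)
    moreover have "card ({i} \<union> {m+1..n}) = n - m + 1" using h by simp
    ultimately show False using card_contra[of q "{i} \<union> {m+1..n}" "{m+1..n}"] mn by simp
  qed
  have D: "\<And>i. 1 \<le> i \<Longrightarrow> i \<le> m \<Longrightarrow> p i > m"
  proof (rule ccontr)
    fix i assume h: "1 \<le> i" "i \<le> m" "\<not> p i > m"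
    have im: "i < m" using h m mn by (cases "i = m") auto
    show False
    proof (cases "p i = m")
      case True
      then have "q i = n" unfolding q_def using m by simp
      thus False using C2[of i] h im mn by simp
    next
      case False
      hence pim: "p i < m" using h by simp
      obtain j where j: "1 \<le> j" "j \<le> n" "p j = m" using surj[of m] m by auto
      have "j \<noteq> i" using j False by auto
      show False
      proof (cases "j < i")
        case True
        have "q j = n" unfolding q_def using m j by simp
        thus False using C2[of j] j True im mn by simp
      next
        case False
        hence ji: "i < j" using \<open>j \<noteq> i\<close> by simp
        have "i \<noteq> 1" using C1 pim by auto
        hence "1 < i" using h by simp
        thus False using av1 pat312[of 1 i j n p] ji j pim C1 by simp
      qed
    qed
  qed
  have E: "\<And>i. 1 \<le> i \<Longrightarrow> i \<le> m \<Longrightarrow> p i > k"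
  proof (rule ccontr)
    fix i assume h: "1 \<le> i" "i \<le> m" "\<not> p i > k"
    define l where "l = p i"
    have lS: "m < l" "l \<le> n" using D[OF h(1,2)] rng[of i] h m unfolding l_def by auto
    have pl: "p l \<le> m"
    proof (cases "i = m")
      case True thus ?thesis using m assms(4) l_def by simp
    next
      case False thus ?thesis using C2[of i] h unfolding q_def l_def by simp
    qed
    have "p ` {l..n} \<subseteq> {1..m}"
    proof
      fix y assume "y \<in> p ` {l..n}"
      then obtain x where x: "l \<le> x" "x \<le> n" "y = p x" by auto
      have "p x \<le> p l" using A[of l x] lS x by (cases "x = l") auto
      thus "y \<in> {1..m}" using pl x rng[of x] lS by auto
    qed
    moreover have "inj_on p {l..n}" using inj by (simp add: inj_on_def injeq)
    moreover have "card {l..n} = n + 1 - l" by simp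
    moreover have "l \<le> k" using h l_def by simp
    hence "m < n + 1 - l" using k_def lS by linarith
    ultimately show False using card_contra[of p "{l..n}" "{1..m}"] by simp
  qed
  have F: "\<And>l. m < l \<Longrightarrow> l \<le> n \<Longrightarrow> p l \<le> k"
  proof (rule ccontr)
    fix l assume h: "m < l" "l \<le> n" "\<not> p l \<le> k"
    have "p ` ({1..m} \<union> {l}) \<subseteq> {k+1..n}"
    proof
      fix y assume "y \<in> p ` ({1..m} \<union> {l})"
      then obtain x where x: "x \<in> {1..m} \<union> {l}" "y = p x" by blast
      show "y \<in> {k+1..n}"
      proof (cases "x = l")
        case True thus ?thesis using h x rng[of l] m by auto
      next
        case False
        hence "1 \<le> x" "x \<le> m" using x by auto
        thus ?thesis using E[of x] x rng[of x] m by auto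
      qed
    qed
    moreover have "inj_on p ({1..m} \<union> {l})" using inj by (simp add: inj_on_def injeq)
    moreover have "card ({1..m} \<union> {l}) = m + 1" using h by simp
    ultimately show False using card_contra[of p "{1..m} \<union> {l}" "{k+1..n}"] k_def mn by simp
  qed
  have Gup: "\<And>d. m + 1 + d \<le> n \<Longrightarrow> p (m + 1 + d) + d \<le> k"
  proof -
    fix d show "m + 1 + d \<le> n \<Longrightarrow> p (m + 1 + d) + d \<le> k"
    proof (induction d)
      case 0 thus ?case using F[of "m+1"] by simp
    next
      case (Suc d)
      have "p (m + 1 + Suc d) < p (m + 1 + d)" using A[of "m+1+d" "m+1+Suc d"] Suc.prems by simp
      thus ?case using Suc by simp
    qed
  qed
  have Glo: "\<And>d. d < n - m \<Longrightarrow> p (n - d) \<ge> d + 1"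
  proof -
    fix d show "d < n - m \<Longrightarrow> p (n - d) \<ge> d + 1"
    proof (induction d)
      case 0 thus ?case using assms(4) by simp
    next
      case (Suc d)
      have "p (n - Suc d) > p (n - d)" using A[of "n - Suc d" "n - d"] Suc.prems by simp
      thus ?case using Suc by simp
    qed
  qed
  have G: "\<And>l. m < l \<Longrightarrow> l \<le> n \<Longrightarrow> p l = n + 1 - l"
  proof -
    fix l assume h: "m < l" "l \<le> n"
    have "p (m + 1 + (l - m - 1)) + (l - m - 1) \<le> k" using Gup[of "l - m - 1"] h by simp
    hence u: "p l + (l - m - 1) \<le> k" using h by simp
    have "p (n - (n - l)) \<ge> (n - l) + 1" using Glo[of "n - l"] h by simp
    hence "p l \<ge> n - l + 1" using h by simp
    thus "p l = n + 1 - l" using u h k_def by simp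
  qed
  have km: "m \<le> k"
  proof (rule ccontr)
    assume "\<not> m \<le> k"
    obtain j where j: "1 \<le> j" "j \<le> n" "p j = m" using surj[of m] m by auto
    show False
    proof (cases "j \<le> m")
      case True thus False using D[of j] j by simp
    next
      case False thus False using F[of j] j \<open>\<not> m \<le> k\<close> by simp
    qed
  qed
  have qrev: "\<And>j. 1 \<le> j \<Longrightarrow> j \<le> m \<Longrightarrow> q (n + 1 - j) = p j"
  proof -
    fix j assume h: "1 \<le> j" "j \<le> m"
    have "p (n + 1 - j) = n + 1 - (n + 1 - j)" using G[of "n + 1 - j"] h km k_def mn by simp
    thus "q (n + 1 - j) = p j" unfolding q_def using h mn by simp
  qed
  have H: "\<And>i. 1 \<le> i \<Longrightarrow> i < m \<Longrightarrow> p i < p (i + 1)"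
  proof (rule ccontr)
    fix i assume h: "1 \<le> i" "i < m" "\<not> p i < p (i + 1)"
    have "p i \<noteq> p (i+1)" using injeq by (metis n_not_Suc_n Suc_eq_plus1)
    hence lt: "p (i+1) < p i" using h by simp
    have "p i \<noteq> n" using injeq m h by (metis less_irrefl)
    hence pin: "p i < n" using rng[of i] h m by simp
    have i1: "i + 1 < m" using lt pin m h by (cases "i + 1 = m") auto
    have q1: "q (n + 1 - m) = n" using qrev[of m] m by simp
    have q2: "q (n + 1 - (i+1)) = p (i+1)" using qrev[of "i+1"] i1 by simp
    have q3: "q (n + 1 - i) = p i" using qrev[of i] h by simp
    have "contains_pattern n q [3,1,2]"
      using pat312[of "n + 1 - m" "n + 1 - (i+1)" "n + 1 - i" n q] q1 q2 q3 lt pin i1 h mn by simp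
    thus False using av2 unfolding q_def by simp
  qed
  have Ilo: "\<And>d. 1 + d \<le> m \<Longrightarrow> p (1 + d) \<ge> k + 1 + d"
  proof -
    fix d show "1 + d \<le> m \<Longrightarrow> p (1 + d) \<ge> k + 1 + d"
    proof (induction d)
      case 0 thus ?case using E[of 1] m by simp
    next
      case (Suc d)
      have "p (1 + d) < p (1 + d + 1)" using H[of "1 + d"] Suc.prems by simp
      thus ?case using Suc by simp
    qed
  qed
  have Iup: "\<And>d. d < m \<Longrightarrow> p (m - d) + d \<le> n"
  proof -
    fix d show "d < m \<Longrightarrow> p (m - d) + d \<le> n"
    proof (induction d)
      case 0 thus ?case using m by simp
    next
      case (Suc d)
      have "p (m - Suc d) < p (m - Suc d + 1)" using H[of "m - Suc d"] Suc.prems by simp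
      moreover have "m - Suc d + 1 = m - d" using Suc.prems by simp
      ultimately show ?case using Suc by simp
    qed
  qed
  have I: "\<And>i. 1 \<le> i \<Longrightarrow> i \<le> m \<Longrightarrow> p i = k + i"
  proof -
    fix i assume h: "1 \<le> i" "i \<le> m"
    have "p (1 + (i - 1)) \<ge> k + 1 + (i - 1)" using Ilo[of "i - 1"] h by simp
    hence a: "p i \<ge> k + i" using h by simp
    have "p (m - (m - i)) + (m - i) \<le> n" using Iup[of "m - i"] h by simp
    hence "p i + (m - i) \<le> n" using h by simp
    thus "p i = k + i" using a k_def h mn by simp
  qed
  show ?thesis
  proof (intro exI[of _ k] conjI ballI)
    show "1 \<le> k" "k \<le> n" using k_def mn by auto
  next
    fix j assume "j \<in> {1..n}"
    thus "p j = (if j \<le> n - k then k + j else n + 1 - j)"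
      using I[of j] G[of j] k_def mn by auto
  qed
qed

end
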